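(* Let $\mathcal{A},\mathcal{B}$ be abelian categories with enough projective objects and let $F\colon\mathcal{A}\to\mathcal{B}$ be left adjoint to $G\colon\mathcal{B}\to\mathcal{A}$, with both $F$ and $G$ exact. Assume $G(\mathcal{P}(\mathcal{B}))\subseteq\mathcal{P}(\mathcal{A})$. Then $\mathrm{Gpd}_\mathcal{A}(X)\ge\mathrm{Gpd}_\mathcal{B}(F(X))$ for every $X\in\mathcal{A}$; in particular $F$ sends Gorenstein projective objects to Gorenstein projective objects.
   Context: $\mathcal{P}(\mathcal{A})$ is the class of projective objects. An object is Gorenstein projective if it is isomorphic to $Z^0(P^\bullet)$ for an acyclic complex $P^\bullet$ of projectives such that $\mathrm{Hom}(P^\bullet,Q)$ is acyclic for each projective $Q$. $\mathrm{Gpd}(X)\le n$ iff there is an exact sequence $0\to M^{-n}\to\cdots\to M^0\to X\to0$ with all $M^{-i}$ Gorenstein projective. *)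

theory Defs
  imports "HOL-Algebra.Group" "HOL-Library.Extended_Nat"
begin

text \<open>A (small-or-large, set-presented) category: objects of type 'o, morphisms of
 type 'm.  hom X Y is the hom-set, cmp g f is the composite g after f, idm X the
 identity, ad the addition on hom-sets and zr X Y the zero morphism X to Y.\<close>

record ('o, 'm) cat =
  obj :: "'o set"
  hom :: "'o \<Rightarrow> 'o \<Rightarrow> 'm set"
  cmp :: "'m \<Rightarrow> 'm \<Rightarrow> 'm"
  idm :: "'o \<Rightarrow> 'm"
  ad  :: "'m \<Rightarrow> 'm \<Rightarrow> 'm"
  zr  :: "'o \<Rightarrow> 'o \<Rightarrow> 'm"

definition is_category :: "('o, 'm, 'x) cat_scheme \<Rightarrow> bool" where
  "is_category C \<longleftrightarrow>
     (\<forall>X Y Z f g. X \<in> obj C \<and> Y \<in> obj C \<and> Z \<in> obj C \<and> f \<in> hom C X Y \<and> g \<in> hom C Y Z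
        \<longrightarrow> cmp C g f \<in> hom C X Z)
   \<and> (\<forall>X \<in> obj C. idm C X \<in> hom C X X)
   \<and> (\<forall>X Y f. X \<in> obj C \<and> Y \<in> obj C \<and> f \<in> hom C X Y
        \<longrightarrow> cmp C f (idm C X) = f \<and> cmp C (idm C Y) f = f)
   \<and> (\<forall>W X Y Z f g h. W \<in> obj C \<and> X \<in> obj C \<and> Y \<in> obj C \<and> Z \<in> obj C
        \<and> f \<in> hom C W X \<and> g \<in> hom C X Y \<and> h \<in> hom C Y Z
        \<longrightarrow> cmp C h (cmp C g f) = cmp C (cmp C h g) f)
   \<and> (\<forall>X Y X' Y'. X \<in> obj C \<and> Y \<in> obj C \<and> X' \<in> obj C \<and> Y' \<in> obj C
        \<and> hom C X Y \<inter> hom C X' Y' \<noteq> {} \<longrightarrow> X = X' \<and> Y = Y')"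

definition hom_grp :: "('o, 'm, 'x) cat_scheme \<Rightarrow> 'o \<Rightarrow> 'o \<Rightarrow> 'm monoid" where
  "hom_grp C X Y = \<lparr>carrier = hom C X Y, mult = ad C, one = zr C X Y\<rparr>"

definition is_preadditive :: "('o, 'm, 'x) cat_scheme \<Rightarrow> bool" where
  "is_preadditive C \<longleftrightarrow> is_category C
   \<and> (\<forall>X \<in> obj C. \<forall>Y \<in> obj C. comm_group (hom_grp C X Y))
   \<and> (\<forall>X Y Z f f' g g'. X \<in> obj C \<and> Y \<in> obj C \<and> Z \<in> obj C
        \<and> f \<in> hom C X Y \<and> f' \<in> hom C X Y \<and> g \<in> hom C Y Z \<and> g' \<in> hom C Y Z
        \<longrightarrow> cmp C g (ad C f f') = ad C (cmp C g f) (cmp C g f')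
          \<and> cmp C (ad C g g') f = ad C (cmp C g f) (cmp C g' f))"

definition is_mono :: "('o, 'm, 'x) cat_scheme \<Rightarrow> 'o \<Rightarrow> 'o \<Rightarrow> 'm \<Rightarrow> bool" where
  "is_mono C X Y f \<longleftrightarrow> X \<in> obj C \<and> Y \<in> obj C \<and> f \<in> hom C X Y
   \<and> (\<forall>W \<in> obj C. \<forall>g \<in> hom C W X. \<forall>h \<in> hom C W X. cmp C f g = cmp C f h \<longrightarrow> g = h)"

definition is_epi :: "('o, 'm, 'x) cat_scheme \<Rightarrow> 'o \<Rightarrow> 'o \<Rightarrow> 'm \<Rightarrow> bool" where
  "is_epi C X Y f \<longleftrightarrow> X \<in> obj C \<and> Y \<in> obj C \<and> f \<in> hom C X Y
   \<and> (\<forall>W \<in> obj C. \<forall>g \<in> hom C Y W. \<forall>h \<in> hom C Y W. cmp C g f = cmp C h f \<longrightarrow> g = h)"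

definition is_kernel :: "('o, 'm, 'x) cat_scheme \<Rightarrow> 'm \<Rightarrow> 'o \<Rightarrow> 'o \<Rightarrow> 'm \<Rightarrow> 'o \<Rightarrow> bool" where
  "is_kernel C f X Y k K \<longleftrightarrow> X \<in> obj C \<and> Y \<in> obj C \<and> K \<in> obj C
   \<and> f \<in> hom C X Y \<and> k \<in> hom C K X \<and> cmp C f k = zr C K Y
   \<and> (\<forall>W \<in> obj C. \<forall>h \<in> hom C W X. cmp C f h = zr C W Y
        \<longrightarrow> (\<exists>!u. u \<in> hom C W K \<and> cmp C k u = h))"

definition is_cokernel :: "('o, 'm, 'x) cat_scheme \<Rightarrow> 'm \<Rightarrow> 'o \<Rightarrow> 'o \<Rightarrow> 'm \<Rightarrow> 'o \<Rightarrow> bool" where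
  "is_cokernel C f X Y c Q \<longleftrightarrow> X \<in> obj C \<and> Y \<in> obj C \<and> Q \<in> obj C
   \<and> f \<in> hom C X Y \<and> c \<in> hom C Y Q \<and> cmp C c f = zr C X Q
   \<and> (\<forall>W \<in> obj C. \<forall>h \<in> hom C Y W. cmp C h f = zr C X W
        \<longrightarrow> (\<exists>!u. u \<in> hom C Q W \<and> cmp C u c = h))"

definition is_abelian :: "('o, 'm, 'x) cat_scheme \<Rightarrow> bool" where
  "is_abelian C \<longleftrightarrow> is_preadditive C
   \<comment> \<open>zero object\<close>
   \<and> (\<exists>Z \<in> obj C. \<forall>X \<in> obj C. hom C Z X = {zr C Z X} \<and> hom C X Z = {zr C X Z})
   \<comment> \<open>binary biproducts\<close>
   \<and> (\<forall>X \<in> obj C. \<forall>Y \<in> obj C. \<exists>S \<in> obj C. \<exists>i1 \<in> hom C X S. \<exists>i2 \<in> hom C Y S.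
        \<exists>p1 \<in> hom C S X. \<exists>p2 \<in> hom C S Y.
          cmp C p1 i1 = idm C X \<and> cmp C p2 i2 = idm C Y
        \<and> cmp C p1 i2 = zr C Y X \<and> cmp C p2 i1 = zr C X Y
        \<and> ad C (cmp C i1 p1) (cmp C i2 p2) = idm C S)
   \<comment> \<open>kernels and cokernels\<close>
   \<and> (\<forall>X \<in> obj C. \<forall>Y \<in> obj C. \<forall>f \<in> hom C X Y.
        (\<exists>k K. is_kernel C f X Y k K) \<and> (\<exists>c Q. is_cokernel C f X Y c Q))
   \<comment> \<open>every mono is a kernel, every epi is a cokernel\<close>
   \<and> (\<forall>X Y m. is_mono C X Y m \<longrightarrow> (\<exists>Z \<in> obj C. \<exists>g \<in> hom C Y Z. is_kernel C g Y Z m X))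
   \<and> (\<forall>X Y e. is_epi C X Y e \<longrightarrow> (\<exists>Z \<in> obj C. \<exists>g \<in> hom C Z X. is_cokernel C g Z X e Y))"

text \<open>Exactness of A --f--> B --g--> C at B: gf = 0 and ker g \<subseteq> im f, the latter
 expressed as: every morphism into B killed by g is killed by the cokernel of f
 (im f = ker (coker f)).\<close>
definition exact_at :: "('o, 'm, 'x) cat_scheme \<Rightarrow> 'o \<Rightarrow> 'o \<Rightarrow> 'o \<Rightarrow> 'm \<Rightarrow> 'm \<Rightarrow> bool" where
  "exact_at C A B D f g \<longleftrightarrow> A \<in> obj C \<and> B \<in> obj C \<and> D \<in> obj C
   \<and> f \<in> hom C A B \<and> g \<in> hom C B D \<and> cmp C g f = zr C A D
   \<and> (\<forall>W \<in> obj C. \<forall>h \<in> hom C W B. \<forall>c Q. cmp C g h = zr C W D \<and> is_cokernel C f A B c Q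
        \<longrightarrow> cmp C c h = zr C W Q)"

definition is_projective :: "('o, 'm, 'x) cat_scheme \<Rightarrow> 'o \<Rightarrow> bool" where
  "is_projective C P \<longleftrightarrow> P \<in> obj C
   \<and> (\<forall>X Y e f. is_epi C X Y e \<and> f \<in> hom C P Y \<longrightarrow> (\<exists>g \<in> hom C P X. cmp C e g = f))"

definition enough_projectives :: "('o, 'm, 'x) cat_scheme \<Rightarrow> bool" where
  "enough_projectives C \<longleftrightarrow>
     (\<forall>X \<in> obj C. \<exists>P e. is_projective C P \<and> is_epi C P X e)"

definition is_functor ::
  "('o1, 'm1, 'x) cat_scheme \<Rightarrow> ('o2, 'm2, 'y) cat_scheme \<Rightarrow> ('o1 \<Rightarrow> 'o2) \<Rightarrow> ('m1 \<Rightarrow> 'm2) \<Rightarrow> bool" where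
  "is_functor C D Fo Fm \<longleftrightarrow>
     (\<forall>X \<in> obj C. Fo X \<in> obj D)
   \<and> (\<forall>X \<in> obj C. \<forall>Y \<in> obj C. \<forall>f \<in> hom C X Y. Fm f \<in> hom D (Fo X) (Fo Y))
   \<and> (\<forall>X \<in> obj C. Fm (idm C X) = idm D (Fo X))
   \<and> (\<forall>X Y Z f g. X \<in> obj C \<and> Y \<in> obj C \<and> Z \<in> obj C \<and> f \<in> hom C X Y \<and> g \<in> hom C Y Z
        \<longrightarrow> Fm (cmp C g f) = cmp D (Fm g) (Fm f))"

definition exact_functor ::
  "('o1, 'm1, 'x) cat_scheme \<Rightarrow> ('o2, 'm2, 'y) cat_scheme \<Rightarrow> ('o1 \<Rightarrow> 'o2) \<Rightarrow> ('m1 \<Rightarrow> 'm2) \<Rightarrow> bool" where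
  "exact_functor C D Fo Fm \<longleftrightarrow> is_functor C D Fo Fm
   \<and> (\<forall>A B E f g. exact_at C A B E f g \<longrightarrow> exact_at D (Fo A) (Fo B) (Fo E) (Fm f) (Fm g))"

definition left_adjoint ::
  "('o1, 'm1, 'x) cat_scheme \<Rightarrow> ('o2, 'm2, 'y) cat_scheme \<Rightarrow> ('o1 \<Rightarrow> 'o2) \<Rightarrow> ('m1 \<Rightarrow> 'm2)
    \<Rightarrow> ('o2 \<Rightarrow> 'o1) \<Rightarrow> ('m2 \<Rightarrow> 'm1) \<Rightarrow> bool" where
  "left_adjoint C D Fo Fm Go Gm \<longleftrightarrow> is_functor C D Fo Fm \<and> is_functor D C Go Gm
   \<and> (\<exists>\<phi> :: 'o1 \<Rightarrow> 'o2 \<Rightarrow> 'm2 \<Rightarrow> 'm1.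
        (\<forall>X \<in> obj C. \<forall>Y \<in> obj D. bij_betw (\<phi> X Y) (hom D (Fo X) Y) (hom C X (Go Y)))
      \<and> (\<forall>X X' Y Y' h k g. X \<in> obj C \<and> X' \<in> obj C \<and> Y \<in> obj D \<and> Y' \<in> obj D
          \<and> h \<in> hom C X' X \<and> k \<in> hom D Y Y' \<and> g \<in> hom D (Fo X) Y
          \<longrightarrow> \<phi> X' Y' (cmp D k (cmp D g (Fm h))) = cmp C (Gm k) (cmp C (\<phi> X Y g) h)))"

text \<open>X is Gorenstein projective: there is an acyclic complex (P n, d n : P n \<rightarrow> P (n+1))
 of projectives such that Hom(P,Q) is acyclic for every projective Q, and X \<cong> Z^0(P),
 i.e. X is (the source of) a kernel of d 0.\<close>
definition gorenstein_projective :: "('o, 'm, 'x) cat_scheme \<Rightarrow> 'o \<Rightarrow> bool" where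
  "gorenstein_projective C X \<longleftrightarrow>
   (\<exists>(P :: int \<Rightarrow> 'o) (d :: int \<Rightarrow> 'm) k.
      (\<forall>n. is_projective C (P n))
    \<and> (\<forall>n. d n \<in> hom C (P n) (P (n + 1)))
    \<and> (\<forall>n. exact_at C (P (n - 1)) (P n) (P (n + 1)) (d (n - 1)) (d n))
    \<and> (\<forall>Q. is_projective C Q \<longrightarrow>
         (\<forall>n. \<forall>f \<in> hom C (P n) Q. cmp C f (d (n - 1)) = zr C (P (n - 1)) Q
              \<longrightarrow> (\<exists>g \<in> hom C (P (n + 1)) Q. f = cmp C g (d n))))
    \<and> is_kernel C (d 0) (P 0) (P 1) k X)"

text \<open>Gpd(X) \<le> n: exact sequence 0 \<rightarrow> M^{-n} \<rightarrow> ... \<rightarrow> M^0 \<rightarrow> X \<rightarrow> 0 with all M^{-i}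
 Gorenstein projective.  Encoding: S 0 = X, S (i+1) = M^{-i} (i \<le> n), maps
 c j : S (j+1) \<rightarrow> S j for j \<le> n; c 0 epi, c n mono, exact in between.\<close>
definition gpd_le :: "('o, 'm, 'x) cat_scheme \<Rightarrow> 'o \<Rightarrow> nat \<Rightarrow> bool" where
  "gpd_le C X n \<longleftrightarrow>
   (\<exists>(S :: nat \<Rightarrow> 'o) (c :: nat \<Rightarrow> 'm).
      S 0 = X
    \<and> (\<forall>i \<le> n. gorenstein_projective C (S (Suc i)))
    \<and> (\<forall>j \<le> n. c j \<in> hom C (S (Suc j)) (S j))
    \<and> is_epi C (S 1) (S 0) (c 0)
    \<and> is_mono C (S (Suc n)) (S n) (c n)
    \<and> (\<forall>j < n. exact_at C (S (j + 2)) (S (j + 1)) (S j) (c (j + 1)) (c j)))"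

definition Gpd :: "('o, 'm, 'x) cat_scheme \<Rightarrow> 'o \<Rightarrow> enat" where
  "Gpd C X = Inf {enat n | n. gpd_le C X n}"

end

theory Submission
  imports Defs
begin

lemma cat_parts1: assumes "is_category C" shows "\<forall>X Y Z f g. X \<in> obj C \<and> Y \<in> obj C \<and> Z \<in> obj C \<and> f \<in> hom C X Y \<and> g \<in> hom C Y Z
        \<longrightarrow> cmp C g f \<in> hom C X Z"
  using assms unfolding is_category_def by (elim conjE) assumption
lemma cat_parts2: assumes "is_category C" shows "\<forall>X \<in> obj C. idm C X \<in> hom C X X"
  using assms unfolding is_category_def by (elim conjE) assumption
lemma cat_parts3: assumes "is_category C" shows "\<forall>X Y f. X \<in> obj C \<and> Y \<in> obj C \<and> f \<in> hom C X Y
        \<longrightarrow> cmp C f (idm C X) = f \<and> cmp C (idm C Y) f = f"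
  using assms unfolding is_category_def by (elim conjE) assumption
lemma cat_parts4: assumes "is_category C" shows "\<forall>W X Y Z f g h. W \<in> obj C \<and> X \<in> obj C \<and> Y \<in> obj C \<and> Z \<in> obj C
        \<and> f \<in> hom C W X \<and> g \<in> hom C X Y \<and> h \<in> hom C Y Z
        \<longrightarrow> cmp C h (cmp C g f) = cmp C (cmp C h g) f"
  using assms unfolding is_category_def by (elim conjE) assumption
lemma cat_comp: "is_category C \<Longrightarrow> X \<in> obj C \<Longrightarrow> Y \<in> obj C \<Longrightarrow> Z \<in> obj C \<Longrightarrow> f \<in> hom C X Y \<Longrightarrow> g \<in> hom C Y Z \<Longrightarrow> cmp C g f \<in> hom C X Z"
  using cat_parts1 by blast
lemma cat_id: "is_category C \<Longrightarrow> X \<in> obj C \<Longrightarrow> idm C X \<in> hom C X X"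
  using cat_parts2 by blast
lemma cat_idr: "is_category C \<Longrightarrow> X \<in> obj C \<Longrightarrow> Y \<in> obj C \<Longrightarrow> f \<in> hom C X Y \<Longrightarrow> cmp C f (idm C X) = f"
  using cat_parts3 by blast
lemma cat_idl: "is_category C \<Longrightarrow> X \<in> obj C \<Longrightarrow> Y \<in> obj C \<Longrightarrow> f \<in> hom C X Y \<Longrightarrow> cmp C (idm C Y) f = f"
  using cat_parts3 by blast
lemma cat_assoc: "is_category C \<Longrightarrow> W \<in> obj C \<Longrightarrow> X \<in> obj C \<Longrightarrow> Y \<in> obj C \<Longrightarrow> Z \<in> obj C \<Longrightarrow>
   f \<in> hom C W X \<Longrightarrow> g \<in> hom C X Y \<Longrightarrow> h \<in> hom C Y Z \<Longrightarrow> cmp C h (cmp C g f) = cmp C (cmp C h g) f"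
  using cat_parts4 by blast
lemma pa_cat: "is_preadditive C \<Longrightarrow> is_category C" unfolding is_preadditive_def by (elim conjE) assumption
lemma ab_pa: "is_abelian C \<Longrightarrow> is_preadditive C" unfolding is_abelian_def by (elim conjE) assumption
lemma pa_parts: assumes "is_preadditive C" shows "(\<forall>X Y Z f f' g g'. X \<in> obj C \<and> Y \<in> obj C \<and> Z \<in> obj C
        \<and> f \<in> hom C X Y \<and> f' \<in> hom C X Y \<and> g \<in> hom C Y Z \<and> g' \<in> hom C Y Z
        \<longrightarrow> cmp C g (ad C f f') = ad C (cmp C g f) (cmp C g f')
          \<and> cmp C (ad C g g') f = ad C (cmp C g f) (cmp C g' f))"
  using assms unfolding is_preadditive_def by (elim conjE) assumption
lemma pa_grp0: assumes "is_preadditive C" shows "\<forall>X \<in> obj C. \<forall>Y \<in> obj C. comm_group (hom_grp C X Y)"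
  using assms unfolding is_preadditive_def by (elim conjE) assumption

lemma pa_grp: "is_preadditive C \<Longrightarrow> X \<in> obj C \<Longrightarrow> Y \<in> obj C \<Longrightarrow> group (hom_grp C X Y)"
  using pa_grp0 comm_group.axioms(2) by blast
lemma hg_simps[simp]: "carrier (hom_grp C X Y) = hom C X Y" "mult (hom_grp C X Y) = ad C" "one (hom_grp C X Y) = zr C X Y"
  by (simp_all add: hom_grp_def)

lemma pa_distl: "is_preadditive C \<Longrightarrow> X \<in> obj C \<Longrightarrow> Y \<in> obj C \<Longrightarrow> Z \<in> obj C \<Longrightarrow> f \<in> hom C X Y \<Longrightarrow> f' \<in> hom C X Y \<Longrightarrow> g \<in> hom C Y Z
  \<Longrightarrow> cmp C g (ad C f f') = ad C (cmp C g f) (cmp C g f')"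
  using pa_parts by blast
lemma pa_distr: "is_preadditive C \<Longrightarrow> X \<in> obj C \<Longrightarrow> Y \<in> obj C \<Longrightarrow> Z \<in> obj C \<Longrightarrow> f \<in> hom C X Y \<Longrightarrow> g \<in> hom C Y Z \<Longrightarrow> g' \<in> hom C Y Z
  \<Longrightarrow> cmp C (ad C g g') f = ad C (cmp C g f) (cmp C g' f)"
  using pa_parts by blast

lemma zr_closed: "is_preadditive C \<Longrightarrow> X \<in> obj C \<Longrightarrow> Y \<in> obj C \<Longrightarrow> zr C X Y \<in> hom C X Y"
  using monoid.one_closed[OF group.is_monoid[OF pa_grp[of C X Y]]] by simp

lemma comp_zr_r: assumes C: "is_preadditive C" and o: "X \<in> obj C" "Y \<in> obj C" "Z \<in> obj C" and g: "g \<in> hom C Y Z"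
  shows "cmp C g (zr C X Y) = zr C X Z"
proof -
  interpret G: group "hom_grp C X Y" using pa_grp[OF C o(1,2)] .
  interpret H: group "hom_grp C X Z" using pa_grp[OF C o(1,3)] .
  have z: "zr C X Y \<in> hom C X Y" using zr_closed[OF C o(1,2)] .
  have zz: "ad C (zr C X Y) (zr C X Y) = zr C X Y" using G.l_one[of "zr C X Y"] z by simp
  have h: "cmp C g (zr C X Y) \<in> hom C X Z" using cat_comp[OF pa_cat[OF C] o z g] .
  have "cmp C g (zr C X Y) = ad C (cmp C g (zr C X Y)) (cmp C g (zr C X Y))"
    using pa_distl[OF C o z z g] zz by simp
  then show ?thesis using H.l_cancel_one[of "cmp C g (zr C X Y)" "cmp C g (zr C X Y)"] h by simp
qed

lemma comp_zr_l: assumes C: "is_preadditive C" and o: "X \<in> obj C" "Y \<in> obj C" "Z \<in> obj C" and f: "f \<in> hom C X Y"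
  shows "cmp C (zr C Y Z) f = zr C X Z"
proof -
  interpret G: group "hom_grp C Y Z" using pa_grp[OF C o(2,3)] .
  interpret H: group "hom_grp C X Z" using pa_grp[OF C o(1,3)] .
  have z: "zr C Y Z \<in> hom C Y Z" using zr_closed[OF C o(2,3)] .
  have zz: "ad C (zr C Y Z) (zr C Y Z) = zr C Y Z" using G.l_one[of "zr C Y Z"] z by simp
  have h: "cmp C (zr C Y Z) f \<in> hom C X Z" using cat_comp[OF pa_cat[OF C] o f z] .
  have "cmp C (zr C Y Z) f = ad C (cmp C (zr C Y Z) f) (cmp C (zr C Y Z) f)"
    using pa_distr[OF C o f z z] zz by simp
  then show ?thesis using H.l_cancel_one[of "cmp C (zr C Y Z) f" "cmp C (zr C Y Z) f"] h by simp
qed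

lemma grp_eq: assumes G: "group G" and g: "g \<in> carrier G" and h: "h \<in> carrier G"
  and e: "g \<otimes>\<^bsub>G\<^esub> inv\<^bsub>G\<^esub> h = \<one>\<^bsub>G\<^esub>" shows "g = h"
proof -
  interpret group G by (rule G)
  have "g = g \<otimes>\<^bsub>G\<^esub> (inv\<^bsub>G\<^esub> h \<otimes>\<^bsub>G\<^esub> h)" using g h by simp
  also have "\<dots> = (g \<otimes>\<^bsub>G\<^esub> inv\<^bsub>G\<^esub> h) \<otimes>\<^bsub>G\<^esub> h" using g h by (simp add: m_assoc)
  also have "\<dots> = h" using e h by simp
  finally show ?thesis .
qed

lemma coker_parts: "is_cokernel C f X Y c Q \<Longrightarrow> Q \<in> obj C \<and> c \<in> hom C Y Q \<and> cmp C c f = zr C X Q"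
  unfolding is_cokernel_def by (elim conjE) (intro conjI; assumption)
lemma coker_univ: "is_cokernel C f X Y c Q \<Longrightarrow> W \<in> obj C \<Longrightarrow> h \<in> hom C Y W \<Longrightarrow> cmp C h f = zr C X W \<Longrightarrow> \<exists>!u. u \<in> hom C Q W \<and> cmp C u c = h"
  unfolding is_cokernel_def by (elim conjE) (drule bspec, assumption, drule bspec, assumption, erule mp, assumption)
lemma ker_parts: "is_kernel C f X Y k K \<Longrightarrow> X \<in> obj C \<and> Y \<in> obj C \<and> K \<in> obj C \<and> f \<in> hom C X Y \<and> k \<in> hom C K X \<and> cmp C f k = zr C K Y"
  unfolding is_kernel_def by (elim conjE) (intro conjI; assumption)
lemma ker_univ: "is_kernel C f X Y k K \<Longrightarrow> W \<in> obj C \<Longrightarrow> h \<in> hom C W X \<Longrightarrow> cmp C f h = zr C W Y \<Longrightarrow> \<exists>!u. u \<in> hom C W K \<and> cmp C k u = h"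
  unfolding is_kernel_def by (elim conjE) (drule bspec, assumption, drule bspec, assumption, erule mp, assumption)

lemma epi_if_coker0:
  assumes C: "is_preadditive C" and o: "X \<in> obj C" "Y \<in> obj C" and e: "e \<in> hom C X Y"
    and ck: "is_cokernel C e X Y c Q" and c0: "c = zr C Y Q"
  shows "is_epi C X Y e"
  unfolding is_epi_def
proof (intro conjI ballI impI o e)
  fix W g h assume W: "W \<in> obj C" and g: "g \<in> hom C Y W" and h: "h \<in> hom C Y W" and gh: "cmp C g e = cmp C h e"
  interpret G: group "hom_grp C Y W" using pa_grp[OF C o(2) W] .
  interpret H: group "hom_grp C X W" using pa_grp[OF C o(1) W] .
  have cat: "is_category C" using pa_cat[OF C] .
  have Q: "Q \<in> obj C" using coker_parts[OF ck] by blast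
  have ih: "inv\<^bsub>hom_grp C Y W\<^esub> h \<in> hom C Y W" using G.inv_closed h by simp
  define d where "d = ad C g (inv\<^bsub>hom_grp C Y W\<^esub> h)"
  have d: "d \<in> hom C Y W" unfolding d_def using G.m_closed[of g "inv\<^bsub>hom_grp C Y W\<^esub> h"] g ih by simp
  have he: "cmp C h e \<in> hom C X W" using cat_comp[OF cat o W e h] .
  have ie: "cmp C (inv\<^bsub>hom_grp C Y W\<^esub> h) e \<in> hom C X W" using cat_comp[OF cat o W e ih] .
  have "ad C (cmp C h e) (cmp C (inv\<^bsub>hom_grp C Y W\<^esub> h) e) = cmp C (ad C h (inv\<^bsub>hom_grp C Y W\<^esub> h)) e"
    using pa_distr[OF C o W e h ih] by simp
  also have "\<dots> = cmp C (zr C Y W) e" using G.r_inv[of h] h by simp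
  also have "\<dots> = zr C X W" using comp_zr_l[OF C o W e] .
  finally have 1: "ad C (cmp C h e) (cmp C (inv\<^bsub>hom_grp C Y W\<^esub> h) e) = zr C X W" .
  have de: "cmp C d e = zr C X W" unfolding d_def using pa_distr[OF C o W e g ih] gh 1 by simp
  obtain u where u: "u \<in> hom C Q W" "cmp C u c = d"
    using ex1_implies_ex[OF coker_univ[OF ck W d de]] by blast
  have "d = zr C Y W" using u c0 comp_zr_r[OF C o(2) Q W u(1)] by simp
  then have "ad C g (inv\<^bsub>hom_grp C Y W\<^esub> h) = zr C Y W" unfolding d_def .
  then show "g = h" using grp_eq[OF pa_grp[OF C o(2) W], of g h] g h by simp
qed

lemma mono_if_ker0:
  assumes C: "is_preadditive C" and o: "X \<in> obj C" "Y \<in> obj C" and m: "m \<in> hom C X Y"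
    and k0: "\<And>W h. W \<in> obj C \<Longrightarrow> h \<in> hom C W X \<Longrightarrow> cmp C m h = zr C W Y \<Longrightarrow> h = zr C W X"
  shows "is_mono C X Y m"
  unfolding is_mono_def
proof (intro conjI ballI impI o m)
  fix W g h assume W: "W \<in> obj C" and g: "g \<in> hom C W X" and h: "h \<in> hom C W X" and gh: "cmp C m g = cmp C m h"
  interpret G: group "hom_grp C W X" using pa_grp[OF C W o(1)] .
  interpret H: group "hom_grp C W Y" using pa_grp[OF C W o(2)] .
  have cat: "is_category C" using pa_cat[OF C] .
  have ih: "inv\<^bsub>hom_grp C W X\<^esub> h \<in> hom C W X" using G.inv_closed h by simp
  define d where "d = ad C g (inv\<^bsub>hom_grp C W X\<^esub> h)"
  have d: "d \<in> hom C W X" unfolding d_def using G.m_closed[of g "inv\<^bsub>hom_grp C W X\<^esub> h"] g ih by simp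
  have "ad C (cmp C m h) (cmp C m (inv\<^bsub>hom_grp C W X\<^esub> h)) = cmp C m (ad C h (inv\<^bsub>hom_grp C W X\<^esub> h))"
    using pa_distl[OF C W o h ih m] by simp
  also have "\<dots> = cmp C m (zr C W X)" using G.r_inv[of h] h by simp
  also have "\<dots> = zr C W Y" using comp_zr_r[OF C W o m] .
  finally have 1: "ad C (cmp C m h) (cmp C m (inv\<^bsub>hom_grp C W X\<^esub> h)) = zr C W Y" .
  have de: "cmp C m d = zr C W Y" unfolding d_def using pa_distl[OF C W o g ih m] gh 1 by simp
  have "d = zr C W X" using k0[OF W d de] .
  then have "ad C g (inv\<^bsub>hom_grp C W X\<^esub> h) = zr C W X" unfolding d_def .
  then show "g = h" using grp_eq[OF pa_grp[OF C W o(1)], of g h] g h by simp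
qed

lemma fun_parts1: assumes "is_functor C D Fo Fm" shows "(\<forall>X \<in> obj C. Fo X \<in> obj D)"
  using assms unfolding is_functor_def by (elim conjE) assumption
lemma fun_parts2: assumes "is_functor C D Fo Fm" shows "(\<forall>X \<in> obj C. \<forall>Y \<in> obj C. \<forall>f \<in> hom C X Y. Fm f \<in> hom D (Fo X) (Fo Y))"
  using assms unfolding is_functor_def by (elim conjE) assumption
lemma fun_parts3: assumes "is_functor C D Fo Fm" shows "(\<forall>X \<in> obj C. Fm (idm C X) = idm D (Fo X))"
  using assms unfolding is_functor_def by (elim conjE) assumption
lemma fun_parts4: assumes "is_functor C D Fo Fm" shows "(\<forall>X Y Z f g. X \<in> obj C \<and> Y \<in> obj C \<and> Z \<in> obj C \<and> f \<in> hom C X Y \<and> g \<in> hom C Y Z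
        \<longrightarrow> Fm (cmp C g f) = cmp D (Fm g) (Fm f))"
  using assms unfolding is_functor_def by (elim conjE) assumption
lemma epi_parts: "is_epi C X Y e \<Longrightarrow> X \<in> obj C \<and> Y \<in> obj C \<and> e \<in> hom C X Y"
  unfolding is_epi_def by (elim conjE) (intro conjI; assumption)
lemma mono_parts: "is_mono C X Y e \<Longrightarrow> X \<in> obj C \<and> Y \<in> obj C \<and> e \<in> hom C X Y"
  unfolding is_mono_def by (elim conjE) (intro conjI; assumption)
lemma fun_obj: "is_functor C D Fo Fm \<Longrightarrow> X \<in> obj C \<Longrightarrow> Fo X \<in> obj D" using fun_parts1 by blast
lemma fun_hom: "is_functor C D Fo Fm \<Longrightarrow> X \<in> obj C \<Longrightarrow> Y \<in> obj C \<Longrightarrow> f \<in> hom C X Y \<Longrightarrow> Fm f \<in> hom D (Fo X) (Fo Y)" using fun_parts2 by blast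
lemma fun_id: "is_functor C D Fo Fm \<Longrightarrow> X \<in> obj C \<Longrightarrow> Fm (idm C X) = idm D (Fo X)" using fun_parts3 by blast
lemma fun_comp: "is_functor C D Fo Fm \<Longrightarrow> X \<in> obj C \<Longrightarrow> Y \<in> obj C \<Longrightarrow> Z \<in> obj C \<Longrightarrow> f \<in> hom C X Y \<Longrightarrow> g \<in> hom C Y Z \<Longrightarrow> Fm (cmp C g f) = cmp D (Fm g) (Fm f)" using fun_parts4 by blast

lemma ex_fun: "exact_functor C D Fo Fm \<Longrightarrow> is_functor C D Fo Fm" unfolding exact_functor_def by (elim conjE)
lemma epi_cancel: "is_epi C X Y e \<Longrightarrow> W \<in> obj C \<Longrightarrow> g \<in> hom C Y W \<Longrightarrow> h \<in> hom C Y W \<Longrightarrow> cmp C g e = cmp C h e \<Longrightarrow> g = h"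
  unfolding is_epi_def by (elim conjE) (drule bspec, assumption, drule bspec, assumption, drule bspec, assumption, erule mp, assumption)
lemma mono_cancel: "is_mono C X Y m \<Longrightarrow> W \<in> obj C \<Longrightarrow> g \<in> hom C W X \<Longrightarrow> h \<in> hom C W X \<Longrightarrow> cmp C m g = cmp C m h \<Longrightarrow> g = h"
  unfolding is_mono_def by (elim conjE) (drule bspec, assumption, drule bspec, assumption, drule bspec, assumption, erule mp, assumption)

lemma ab_zero: "is_abelian C \<Longrightarrow> \<exists>Z \<in> obj C. \<forall>X \<in> obj C. hom C Z X = {zr C Z X} \<and> hom C X Z = {zr C X Z}"
  unfolding is_abelian_def by (elim conjE)
lemma ab_coker: "is_abelian C \<Longrightarrow> X \<in> obj C \<Longrightarrow> Y \<in> obj C \<Longrightarrow> f \<in> hom C X Y \<Longrightarrow> \<exists>c Q. is_cokernel C f X Y c Q"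
  unfolding is_abelian_def by (elim conjE) (drule bspec, assumption, drule bspec, assumption, drule bspec, assumption, erule conjE)
lemma ab_monoker: "is_abelian C \<Longrightarrow> is_mono C X Y m \<Longrightarrow> \<exists>Z \<in> obj C. \<exists>g \<in> hom C Y Z. is_kernel C g Y Z m X"
  unfolding is_abelian_def by (elim conjE) (drule spec, drule spec, drule spec, erule mp)
lemma exact_comp: "exact_at C A B E f g \<Longrightarrow> cmp C g f = zr C A E" unfolding exact_at_def by (elim conjE)
lemma exact_use: "exact_at C A B E f g \<Longrightarrow> W \<in> obj C \<Longrightarrow> h \<in> hom C W B \<Longrightarrow> cmp C g h = zr C W E \<Longrightarrow> is_cokernel C f A B c Q \<Longrightarrow> cmp C c h = zr C W Q"
  unfolding exact_at_def by (elim conjE) (drule bspec, assumption, drule bspec, assumption, drule spec, drule spec, erule mp, rule conjI)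
lemma ex_pres: "exact_functor C D Fo Fm \<Longrightarrow> exact_at C A B E f g \<Longrightarrow> exact_at D (Fo A) (Fo B) (Fo E) (Fm f) (Fm g)"
  unfolding exact_functor_def by (elim conjE) (drule spec, drule spec, drule spec, drule spec, drule spec, erule mp)

lemma F_zr:
  assumes A: "is_abelian C" and B: "is_abelian D" and F: "exact_functor C D Fo Fm" and o: "X \<in> obj C" "Y \<in> obj C"
  shows "Fm (zr C X Y) = zr D (Fo X) (Fo Y)"
proof -
  have pa: "is_preadditive C" using ab_pa[OF A] .
  obtain Z where Z: "Z \<in> obj C" "\<And>X. X \<in> obj C \<Longrightarrow> hom C Z X = {zr C Z X} \<and> hom C X Z = {zr C X Z}"
    using ab_zero[OF A] by blast
  have zz: "cmp C (zr C Z Y) (zr C X Z) = zr C X Y" using comp_zr_l[OF pa o(1) Z(1) o(2) zr_closed[OF pa o(1) Z(1)]] .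
  have ex: "exact_at C X Z Y (zr C X Z) (zr C Z Y)"
    unfolding exact_at_def
  proof (intro conjI allI ballI impI o Z(1) zr_closed[OF pa] zz)
    fix W h c Q assume W: "W \<in> obj C" and h: "h \<in> hom C W Z" and cc: "cmp C (zr C Z Y) h = zr C W Y \<and> is_cokernel C (zr C X Z) X Z c Q"
    have hz: "h = zr C W Z" using Z(2)[OF W] h by blast
    have Q: "Q \<in> obj C" "c \<in> hom C Z Q" using coker_parts[of C] cc by blast+
    show "cmp C c h = zr C W Q" using hz comp_zr_r[OF pa W Z(1) Q(1) Q(2)] by simp
  qed
  have "cmp D (Fm (zr C Z Y)) (Fm (zr C X Z)) = zr D (Fo X) (Fo Y)"
    using exact_comp[OF ex_pres[OF F ex]] .
  moreover have "Fm (zr C X Y) = cmp D (Fm (zr C Z Y)) (Fm (zr C X Z))"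
    using zz fun_comp[OF ex_fun[OF F] o(1) Z(1) o(2) zr_closed[OF pa o(1) Z(1)] zr_closed[OF pa Z(1) o(2)]] by simp
  ultimately show ?thesis by simp
qed

lemma F_epi:
  assumes A: "is_abelian C" and B: "is_abelian D" and F: "exact_functor C D Fo Fm" and e: "is_epi C X Y e"
  shows "is_epi D (Fo X) (Fo Y) (Fm e)"
proof -
  have pa: "is_preadditive C" using ab_pa[OF A] .
  have pb: "is_preadditive D" using ab_pa[OF B] .
  have fu: "is_functor C D Fo Fm" using ex_fun[OF F] .
  have o: "X \<in> obj C" "Y \<in> obj C" "e \<in> hom C X Y" using epi_parts[OF e] by auto
  obtain Z where Z: "Z \<in> obj C" using ab_zero[OF A] by blast
  have ex: "exact_at C X Y Z e (zr C Y Z)"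
    unfolding exact_at_def
  proof (intro conjI allI ballI impI o Z zr_closed[OF pa] comp_zr_l[OF pa])
    fix W h c Q assume W: "W \<in> obj C" and h: "h \<in> hom C W Y" and cc: "cmp C (zr C Y Z) h = zr C W Z \<and> is_cokernel C e X Y c Q"
    have Q: "Q \<in> obj C" "c \<in> hom C Y Q" "cmp C c e = zr C X Q" using coker_parts[of C] cc by blast+
    have "cmp C c e = cmp C (zr C Y Q) e" using Q(3) comp_zr_l[OF pa o(1,2) Q(1) o(3)] by simp
    then show "cmp C c h = zr C W Q" using epi_cancel[OF e Q(1) Q(2) zr_closed[OF pa o(2) Q(1)]] comp_zr_l[OF pa W o(2) Q(1) h] by simp
  qed
  have exD: "exact_at D (Fo X) (Fo Y) (Fo Z) (Fm e) (zr D (Fo Y) (Fo Z))"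
    using ex_pres[OF F ex] F_zr[OF A B F o(2) Z] by simp
  have oD: "Fo X \<in> obj D" "Fo Y \<in> obj D" "Fm e \<in> hom D (Fo X) (Fo Y)" "Fo Z \<in> obj D"
    using fun_obj[OF fu] fun_hom[OF fu] o Z by auto
  obtain c Q where ck: "is_cokernel D (Fm e) (Fo X) (Fo Y) c Q" using ab_coker[OF B oD(1,2,3)] by blast
  have Q: "Q \<in> obj D" "c \<in> hom D (Fo Y) Q" using coker_parts[OF ck] by blast+
  have "cmp D (zr D (Fo Y) (Fo Z)) (idm D (Fo Y)) = zr D (Fo Y) (Fo Z)"
    using comp_zr_l[OF pb oD(2) oD(2) oD(4) cat_id[OF pa_cat[OF pb] oD(2)]] .
  then have "cmp D c (idm D (Fo Y)) = zr D (Fo Y) Q"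
    using exact_use[OF exD oD(2) cat_id[OF pa_cat[OF pb] oD(2)] _ ck] by blast
  then have "c = zr D (Fo Y) Q" using cat_idr[OF pa_cat[OF pb] oD(2) Q(1,2)] by simp
  then show ?thesis using epi_if_coker0[OF pb oD(1,2,3) ck] by simp
qed

lemma F_mono:
  assumes A: "is_abelian C" and B: "is_abelian D" and F: "exact_functor C D Fo Fm" and m: "is_mono C X Y m"
  shows "is_mono D (Fo X) (Fo Y) (Fm m)"
proof -
  have pa: "is_preadditive C" using ab_pa[OF A] .
  have pb: "is_preadditive D" using ab_pa[OF B] .
  have cb: "is_category D" using pa_cat[OF pb] .
  have fu: "is_functor C D Fo Fm" using ex_fun[OF F] .
  have o: "X \<in> obj C" "Y \<in> obj C" "m \<in> hom C X Y" using mono_parts[OF m] by auto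
  obtain Z where Z: "Z \<in> obj C" using ab_zero[OF A] by blast
  have ex: "exact_at C Z X Y (zr C Z X) m"
    unfolding exact_at_def
  proof (intro conjI allI ballI impI o Z zr_closed[OF pa] comp_zr_r[OF pa])
    fix W h c Q assume W: "W \<in> obj C" and h: "h \<in> hom C W X" and cc: "cmp C m h = zr C W Y \<and> is_cokernel C (zr C Z X) Z X c Q"
    have Q: "Q \<in> obj C" "c \<in> hom C X Q" using coker_parts[of C] cc by blast+
    have "cmp C m h = cmp C m (zr C W X)" using cc comp_zr_r[OF pa W o(1,2) o(3)] by simp
    then show "cmp C c h = zr C W Q" using mono_cancel[OF m W h zr_closed[OF pa W o(1)]] comp_zr_r[OF pa W o(1) Q(1) Q(2)] by simp
  qed
  have exD: "exact_at D (Fo Z) (Fo X) (Fo Y) (zr D (Fo Z) (Fo X)) (Fm m)"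
    using ex_pres[OF F ex] F_zr[OF A B F Z o(1)] by simp
  have oD: "Fo X \<in> obj D" "Fo Y \<in> obj D" "Fm m \<in> hom D (Fo X) (Fo Y)" "Fo Z \<in> obj D"
    using fun_obj[OF fu] fun_hom[OF fu] o Z by auto
  have ck: "is_cokernel D (zr D (Fo Z) (Fo X)) (Fo Z) (Fo X) (idm D (Fo X)) (Fo X)"
    unfolding is_cokernel_def
  proof (intro conjI ballI impI oD zr_closed[OF pb] cat_id[OF cb])
    show "cmp D (idm D (Fo X)) (zr D (Fo Z) (Fo X)) = zr D (Fo Z) (Fo X)"
      using cat_idl[OF cb oD(4) oD(1) zr_closed[OF pb oD(4) oD(1)]] .
    fix W h assume W: "W \<in> obj D" and h: "h \<in> hom D (Fo X) W"
    show "\<exists>!u. u \<in> hom D (Fo X) W \<and> cmp D u (idm D (Fo X)) = h"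
      using cat_idr[OF cb oD(1) W] h by auto
  qed
  show ?thesis
  proof (rule mono_if_ker0[OF pb oD(1,2,3)])
    fix W h assume W: "W \<in> obj D" and h: "h \<in> hom D W (Fo X)" and mh: "cmp D (Fm m) h = zr D W (Fo Y)"
    have "cmp D (idm D (Fo X)) h = zr D W (Fo X)" using exact_use[OF exD W h mh ck] .
    then show "h = zr D W (Fo X)" using cat_idl[OF cb W oD(1) h] by simp
  qed
qed

lemma ex1_eq: "\<exists>!x. P x \<Longrightarrow> P a \<Longrightarrow> P b \<Longrightarrow> a = b" by blast

lemma exact_parts: "exact_at C A B D f g \<Longrightarrow> A \<in> obj C \<and> B \<in> obj C \<and> D \<in> obj C \<and> f \<in> hom C A B \<and> g \<in> hom C B D \<and> cmp C g f = zr C A D"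
  unfolding exact_at_def by (elim conjE) (intro conjI; assumption)

lemma ker_mono: assumes C: "is_abelian C" and k: "is_kernel C f X Y k K" shows "is_mono C K X k"
proof -
  have pa: "is_preadditive C" using ab_pa[OF C] .
  have cc: "is_category C" using pa_cat[OF pa] .
  have o: "X \<in> obj C" "Y \<in> obj C" "K \<in> obj C" "f \<in> hom C X Y" "k \<in> hom C K X" "cmp C f k = zr C K Y"
    using ker_parts[OF k] by auto
  show ?thesis unfolding is_mono_def
  proof (intro conjI ballI impI o)
    fix W g h assume W: "W \<in> obj C" and g: "g \<in> hom C W K" and h: "h \<in> hom C W K" and e: "cmp C k g = cmp C k h"
    have kg: "cmp C k g \<in> hom C W X" using cat_comp[OF cc W o(3) o(1) g o(5)] .
    have "cmp C f (cmp C k g) = zr C W Y"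
      using cat_assoc[OF cc W o(3) o(1) o(2) g o(5) o(4)] o(6) comp_zr_l[OF pa W o(3) o(2) g] by simp
    then have "\<exists>!u. u \<in> hom C W K \<and> cmp C k u = cmp C k g" using ker_univ[OF k W kg] by blast
    then show "g = h" by (rule ex1_eq) (use g h e in auto)
  qed
qed

lemma ker_exact: assumes C: "is_abelian C" and k: "is_kernel C f X Y k K" shows "exact_at C K X Y k f"
proof -
  have pa: "is_preadditive C" using ab_pa[OF C] .
  have cc: "is_category C" using pa_cat[OF pa] .
  have o: "X \<in> obj C" "Y \<in> obj C" "K \<in> obj C" "f \<in> hom C X Y" "k \<in> hom C K X" "cmp C f k = zr C K Y"
    using ker_parts[OF k] by auto
  show ?thesis unfolding exact_at_def
  proof (intro conjI allI ballI impI o)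
    fix W h c Q assume W: "W \<in> obj C" and h: "h \<in> hom C W X" and hc: "cmp C f h = zr C W Y \<and> is_cokernel C k K X c Q"
    obtain u where u: "u \<in> hom C W K" "cmp C k u = h" using ex1_implies_ex[OF ker_univ[OF k W h]] hc by blast
    have Q: "Q \<in> obj C" "c \<in> hom C X Q" "cmp C c k = zr C K Q" using coker_parts[of C k K X c Q] hc by blast+
    show "cmp C c h = zr C W Q"
      using u(2) cat_assoc[OF cc W o(3) o(1) Q(1) u(1) o(5) Q(2)] Q(3) comp_zr_l[OF pa W o(3) Q(1) u(1)] by simp
  qed
qed

lemma mono_exact_ker: assumes C: "is_abelian C" and m: "is_mono C K X k" and e: "exact_at C K X Y k f"
  shows "is_kernel C f X Y k K"
proof -
  have pa: "is_preadditive C" using ab_pa[OF C] .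
  have cc: "is_category C" using pa_cat[OF pa] .
  have o: "K \<in> obj C" "X \<in> obj C" "Y \<in> obj C" "k \<in> hom C K X" "f \<in> hom C X Y" "cmp C f k = zr C K Y"
    using exact_parts[OF e] by auto
  obtain Z g where g: "Z \<in> obj C" "g \<in> hom C X Z" "is_kernel C g X Z k K" using ab_monoker[OF C m] by blast
  obtain c Q where ck: "is_cokernel C k K X c Q" using ab_coker[OF C o(1,2,4)] by blast
  have Q: "Q \<in> obj C" "c \<in> hom C X Q" using coker_parts[OF ck] by auto
  have gk: "cmp C g k = zr C K Z" using ker_parts[OF g(3)] by auto
  obtain v where v: "v \<in> hom C Q Z" "cmp C v c = g" using ex1_implies_ex[OF coker_univ[OF ck g(1,2) gk]] by blast
  show ?thesis unfolding is_kernel_def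
  proof (intro conjI ballI impI o)
    fix W h assume W: "W \<in> obj C" and h: "h \<in> hom C W X" and fh: "cmp C f h = zr C W Y"
    have ch: "cmp C c h = zr C W Q" using exact_use[OF e W h fh ck] .
    have "cmp C g h = zr C W Z"
      using v(2) cat_assoc[OF cc W o(2) Q(1) g(1) h Q(2) v(1)] ch comp_zr_r[OF pa W Q(1) g(1) v(1)] by simp
    then obtain u where u: "u \<in> hom C W K" "cmp C k u = h" using ex1_implies_ex[OF ker_univ[OF g(3) W h]] by blast
    show "\<exists>!u. u \<in> hom C W K \<and> cmp C k u = h"
    proof (rule ex1I[of _ u])
      show "u \<in> hom C W K \<and> cmp C k u = h" using u by blast
      fix u' assume "u' \<in> hom C W K \<and> cmp C k u' = h"
      then show "u' = u" using mono_cancel[OF m W _ u(1)] u(2) by auto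
    qed
  qed
qed

lemma F_ker: assumes A: "is_abelian C" and B: "is_abelian D" and F: "exact_functor C D Fo Fm" and k: "is_kernel C f X Y k K"
  shows "is_kernel D (Fm f) (Fo X) (Fo Y) (Fm k) (Fo K)"
  using mono_exact_ker[OF B F_mono[OF A B F ker_mono[OF A k]] ex_pres[OF F ker_exact[OF A k]]] .

lemma proj_obj: "is_projective C P \<Longrightarrow> P \<in> obj C" unfolding is_projective_def by (elim conjE)
lemma proj_lift: "is_projective C P \<Longrightarrow> is_epi C X Y e \<Longrightarrow> f \<in> hom C P Y \<Longrightarrow> \<exists>g \<in> hom C P X. cmp C e g = f"
  unfolding is_projective_def by (elim conjE) (drule spec, drule spec, drule spec, drule spec, erule mp, rule conjI)

lemma adj_phi: assumes "left_adjoint C D Fo Fm Go Gm"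
  obtains \<phi> where "\<And>X Y. X \<in> obj C \<Longrightarrow> Y \<in> obj D \<Longrightarrow> bij_betw (\<phi> X Y) (hom D (Fo X) Y) (hom C X (Go Y))"
   and "\<And>X X' Y Y' h k g. X \<in> obj C \<Longrightarrow> X' \<in> obj C \<Longrightarrow> Y \<in> obj D \<Longrightarrow> Y' \<in> obj D
          \<Longrightarrow> h \<in> hom C X' X \<Longrightarrow> k \<in> hom D Y Y' \<Longrightarrow> g \<in> hom D (Fo X) Y
          \<Longrightarrow> \<phi> X' Y' (cmp D k (cmp D g (Fm h))) = cmp C (Gm k) (cmp C (\<phi> X Y g) h)"
  using assms unfolding left_adjoint_def by (elim conjE exE) (rule that, blast, blast)

lemma adj_F: "left_adjoint C D Fo Fm Go Gm \<Longrightarrow> is_functor C D Fo Fm" unfolding left_adjoint_def by (elim conjE)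
lemma adj_G: "left_adjoint C D Fo Fm Go Gm \<Longrightarrow> is_functor D C Go Gm" unfolding left_adjoint_def by (elim conjE)

lemma F_proj:
  assumes A: "is_abelian C" and B: "is_abelian D" and adj: "left_adjoint C D Fo Fm Go Gm"
    and G: "exact_functor D C Go Gm" and P: "is_projective C P"
  shows "is_projective D (Fo P)"
proof -
  obtain \<phi> where bij: "\<And>X Y. X \<in> obj C \<Longrightarrow> Y \<in> obj D \<Longrightarrow> bij_betw (\<phi> X Y) (hom D (Fo X) Y) (hom C X (Go Y))"
   and nat: "\<And>X X' Y Y' h k g. X \<in> obj C \<Longrightarrow> X' \<in> obj C \<Longrightarrow> Y \<in> obj D \<Longrightarrow> Y' \<in> obj D
          \<Longrightarrow> h \<in> hom C X' X \<Longrightarrow> k \<in> hom D Y Y' \<Longrightarrow> g \<in> hom D (Fo X) Y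
          \<Longrightarrow> \<phi> X' Y' (cmp D k (cmp D g (Fm h))) = cmp C (Gm k) (cmp C (\<phi> X Y g) h)"
    using adj_phi[OF adj] by blast
  have fF: "is_functor C D Fo Fm" using adj_F[OF adj] .
  have fG: "is_functor D C Go Gm" using adj_G[OF adj] .
  have cA: "is_category C" using pa_cat[OF ab_pa[OF A]] .
  have cB: "is_category D" using pa_cat[OF ab_pa[OF B]] .
  have Po: "P \<in> obj C" using proj_obj[OF P] .
  have FPo: "Fo P \<in> obj D" using fun_obj[OF fF Po] .
  show ?thesis unfolding is_projective_def
  proof (intro conjI allI impI FPo)
    fix X Y e f assume ef: "is_epi D X Y e \<and> f \<in> hom D (Fo P) Y"
    have e: "is_epi D X Y e" and f: "f \<in> hom D (Fo P) Y" using ef by auto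
    have o: "X \<in> obj D" "Y \<in> obj D" "e \<in> hom D X Y" using epi_parts[OF e] by auto
    have Ge: "is_epi C (Go X) (Go Y) (Gm e)" using F_epi[OF B A G e] .
    have pf: "\<phi> P Y f \<in> hom C P (Go Y)" using bij_betw_apply[OF bij[OF Po o(2)] f] .
    obtain g where g: "g \<in> hom C P (Go X)" "cmp C (Gm e) g = \<phi> P Y f" using proj_lift[OF P Ge pf] by blast
    define g0 where "g0 = inv_into (hom D (Fo P) X) (\<phi> P X) g"
    have g0: "g0 \<in> hom D (Fo P) X" unfolding g0_def using bij_betw_apply[OF bij_betw_inv_into[OF bij[OF Po o(1)]] g(1)] .
    have pg0: "\<phi> P X g0 = g" unfolding g0_def using bij_betw_inv_into_right[OF bij[OF Po o(1)] g(1)] .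
    have "\<phi> P Y (cmp D e (cmp D g0 (Fm (idm C P)))) = cmp C (Gm e) (cmp C (\<phi> P X g0) (idm C P))"
      using nat[OF Po Po o(1) o(2) cat_id[OF cA Po] o(3) g0] .
    then have "\<phi> P Y (cmp D e g0) = \<phi> P Y f"
      using fun_id[OF fF Po] cat_idr[OF cB FPo o(1) g0] pg0 cat_idr[OF cA Po _ g(1)] g(2) fun_obj[OF fG o(1)] by simp
    moreover have "cmp D e g0 \<in> hom D (Fo P) Y" using cat_comp[OF cB FPo o(1) o(2) g0 o(3)] .
    ultimately have "cmp D e g0 = f" using bij_betw_imp_inj_on[OF bij[OF Po o(2)]] f unfolding inj_on_def by blast
    then show "\<exists>g\<in>hom D (Fo P) X. cmp D e g = f" using g0 by blast
  qed
qed

lemma phi_zr: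
  assumes A: "is_abelian C" and B: "is_abelian D" and adj: "left_adjoint C D Fo Fm Go Gm" and F: "exact_functor C D Fo Fm"
   and bij: "\<And>X Y. X \<in> obj C \<Longrightarrow> Y \<in> obj D \<Longrightarrow> bij_betw (\<phi> X Y) (hom D (Fo X) Y) (hom C X (Go Y))"
   and nat: "\<And>X X' Y Y' h k g. X \<in> obj C \<Longrightarrow> X' \<in> obj C \<Longrightarrow> Y \<in> obj D \<Longrightarrow> Y' \<in> obj D
          \<Longrightarrow> h \<in> hom C X' X \<Longrightarrow> k \<in> hom D Y Y' \<Longrightarrow> g \<in> hom D (Fo X) Y
          \<Longrightarrow> \<phi> X' Y' (cmp D k (cmp D g (Fm h))) = cmp C (Gm k) (cmp C (\<phi> X Y g) h)"
   and o: "X \<in> obj C" "Y \<in> obj D"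
  shows "\<phi> X Y (zr D (Fo X) Y) = zr C X (Go Y)"
proof -
  have fF: "is_functor C D Fo Fm" using adj_F[OF adj] .
  have fG: "is_functor D C Go Gm" using adj_G[OF adj] .
  have pA: "is_preadditive C" using ab_pa[OF A] .
  have pB: "is_preadditive D" using ab_pa[OF B] .
  have cA: "is_category C" using pa_cat[OF pA] .
  have cB: "is_category D" using pa_cat[OF pB] .
  have FX: "Fo X \<in> obj D" using fun_obj[OF fF o(1)] .
  have GY: "Go Y \<in> obj C" using fun_obj[OF fG o(2)] .
  have z: "zr D (Fo X) Y \<in> hom D (Fo X) Y" using zr_closed[OF pB FX o(2)] .
  have pz: "\<phi> X Y (zr D (Fo X) Y) \<in> hom C X (Go Y)" using bij_betw_apply[OF bij[OF o] z] .
  have "\<phi> X Y (cmp D (idm D Y) (cmp D (zr D (Fo X) Y) (Fm (zr C X X)))) = cmp C (Gm (idm D Y)) (cmp C (\<phi> X Y (zr D (Fo X) Y)) (zr C X X))"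
    using nat[OF o(1) o(1) o(2) o(2) zr_closed[OF pA o(1) o(1)] cat_id[OF cB o(2)] z] .
  moreover have "Fm (zr C X X) = zr D (Fo X) (Fo X)" using F_zr[OF A B F o(1) o(1)] .
  moreover have "cmp D (zr D (Fo X) Y) (zr D (Fo X) (Fo X)) = zr D (Fo X) Y" using comp_zr_r[OF pB FX FX o(2) z] .
  moreover have "cmp D (idm D Y) (zr D (Fo X) Y) = zr D (Fo X) Y" using cat_idl[OF cB FX o(2) z] .
  moreover have "cmp C (\<phi> X Y (zr D (Fo X) Y)) (zr C X X) = zr C X (Go Y)" using comp_zr_r[OF pA o(1) o(1) GY pz] .
  moreover have "cmp C (Gm (idm D Y)) (zr C X (Go Y)) = zr C X (Go Y)"
    using fun_id[OF fG o(2)] cat_idl[OF cA o(1) GY zr_closed[OF pA o(1) GY]] by simp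
  ultimately show ?thesis by simp
qed

lemma gp_parts: assumes "gorenstein_projective C X"
  obtains P d k where "\<And>n::int. is_projective C (P n)" "\<And>n::int. d n \<in> hom C (P n) (P (n + 1))"
    "\<And>n::int. exact_at C (P (n - 1)) (P n) (P (n + 1)) (d (n - 1)) (d n)"
    "\<And>Q (n::int) f. is_projective C Q \<Longrightarrow> f \<in> hom C (P n) Q \<Longrightarrow> cmp C f (d (n - 1)) = zr C (P (n - 1)) Q
              \<Longrightarrow> (\<exists>g \<in> hom C (P (n + 1)) Q. f = cmp C g (d n))"
    "is_kernel C (d 0) (P 0) (P 1) k X"
  using assms unfolding gorenstein_projective_def
proof (elim conjE exE)
  fix P :: "int \<Rightarrow> 'a" and d :: "int \<Rightarrow> 'b" and k
  assume a1: "\<forall>n. is_projective C (P n)" and a2: "\<forall>n. d n \<in> hom C (P n) (P (n + 1))"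
    and a3: "\<forall>n. exact_at C (P (n - 1)) (P n) (P (n + 1)) (d (n - 1)) (d n)"
    and a4: "\<forall>Q. is_projective C Q \<longrightarrow>
         (\<forall>n. \<forall>f \<in> hom C (P n) Q. cmp C f (d (n - 1)) = zr C (P (n - 1)) Q
              \<longrightarrow> (\<exists>g \<in> hom C (P (n + 1)) Q. f = cmp C g (d n)))"
    and a5: "is_kernel C (d 0) (P 0) (P 1) k X"
  show thesis
  proof (rule that[of P d k])
    show "\<And>n. is_projective C (P n)" using a1 by (rule spec)
    show "\<And>n. d n \<in> hom C (P n) (P (n + 1))" using a2 by (rule spec)
    show "\<And>n. exact_at C (P (n - 1)) (P n) (P (n + 1)) (d (n - 1)) (d n)" using a3 by (rule spec)
    show "is_kernel C (d 0) (P 0) (P 1) k X" using a5 .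
    fix Q n f assume "is_projective C Q" "f \<in> hom C (P n) Q" "cmp C f (d (n - 1)) = zr C (P (n - 1)) Q"
    then show "\<exists>g \<in> hom C (P (n + 1)) Q. f = cmp C g (d n)" using a4 by blast
  qed
qed

lemma F_gp:
  assumes A: "is_abelian C" and B: "is_abelian D" and adj: "left_adjoint C D Fo Fm Go Gm"
    and F: "exact_functor C D Fo Fm" and G: "exact_functor D C Go Gm"
    and GP: "\<forall>P. is_projective D P \<longrightarrow> is_projective C (Go P)"
    and X: "gorenstein_projective C X"
  shows "gorenstein_projective D (Fo X)"
proof -
  obtain \<phi> where bij: "\<And>X Y. X \<in> obj C \<Longrightarrow> Y \<in> obj D \<Longrightarrow> bij_betw (\<phi> X Y) (hom D (Fo X) Y) (hom C X (Go Y))"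
   and nat: "\<And>X X' Y Y' h k g. X \<in> obj C \<Longrightarrow> X' \<in> obj C \<Longrightarrow> Y \<in> obj D \<Longrightarrow> Y' \<in> obj D
          \<Longrightarrow> h \<in> hom C X' X \<Longrightarrow> k \<in> hom D Y Y' \<Longrightarrow> g \<in> hom D (Fo X) Y
          \<Longrightarrow> \<phi> X' Y' (cmp D k (cmp D g (Fm h))) = cmp C (Gm k) (cmp C (\<phi> X Y g) h)"
    using adj_phi[OF adj] by blast
  have fF: "is_functor C D Fo Fm" using adj_F[OF adj] .
  have fG: "is_functor D C Go Gm" using adj_G[OF adj] .
  have pA: "is_preadditive C" using ab_pa[OF A] .
  have pB: "is_preadditive D" using ab_pa[OF B] .
  have cA: "is_category C" using pa_cat[OF pA] .
  have cB: "is_category D" using pa_cat[OF pB] .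
  obtain P d k where Pp: "\<And>n::int. is_projective C (P n)" and dh: "\<And>n::int. d n \<in> hom C (P n) (P (n + 1))"
    and ex: "\<And>n::int. exact_at C (P (n - 1)) (P n) (P (n + 1)) (d (n - 1)) (d n)"
    and hq: "\<And>Q (n::int) f. is_projective C Q \<Longrightarrow> f \<in> hom C (P n) Q \<Longrightarrow> cmp C f (d (n - 1)) = zr C (P (n - 1)) Q
              \<Longrightarrow> (\<exists>g \<in> hom C (P (n + 1)) Q. f = cmp C g (d n))"
    and kk: "is_kernel C (d 0) (P 0) (P 1) k X"
    by (rule gp_parts[OF X]) (rule that; assumption)
  have Po: "\<And>n. P n \<in> obj C" using proj_obj[OF Pp] .
  have FPo: "\<And>n. Fo (P n) \<in> obj D" using fun_obj[OF fF Po] .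
  show ?thesis unfolding gorenstein_projective_def
  proof (intro exI[of _ "\<lambda>n. Fo (P n)"] exI[of _ "\<lambda>n. Fm (d n)"] exI[of _ "Fm k"] conjI allI impI ballI)
    fix n show "is_projective D (Fo (P n))" using F_proj[OF A B adj G Pp] .
  next
    fix n show "Fm (d n) \<in> hom D (Fo (P n)) (Fo (P (n + 1)))" using fun_hom[OF fF Po Po dh] .
  next
    fix n show "exact_at D (Fo (P (n - 1))) (Fo (P n)) (Fo (P (n + 1))) (Fm (d (n - 1))) (Fm (d n))"
      using ex_pres[OF F ex] .
  next
    show "is_kernel D (Fm (d 0)) (Fo (P 0)) (Fo (P 1)) (Fm k) (Fo X)" using F_ker[OF A B F kk] .
  next
    fix Q n f assume Q: "is_projective D Q" and f: "f \<in> hom D (Fo (P n)) Q"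
      and fz: "cmp D f (Fm (d (n - 1))) = zr D (Fo (P (n - 1))) Q"
    have Qo: "Q \<in> obj D" using proj_obj[OF Q] .
    have GQ: "is_projective C (Go Q)" using GP Q by blast
    have GQo: "Go Q \<in> obj C" using proj_obj[OF GQ] .
    have dm: "d (n - 1) \<in> hom C (P (n - 1)) (P n)" using dh[of "n - 1"] by simp
    have pf: "\<phi> (P n) Q f \<in> hom C (P n) (Go Q)" using bij_betw_apply[OF bij[OF Po Qo] f] .
    have "\<phi> (P (n - 1)) Q (cmp D (idm D Q) (cmp D f (Fm (d (n - 1)))))
        = cmp C (Gm (idm D Q)) (cmp C (\<phi> (P n) Q f) (d (n - 1)))"
      using nat[OF Po Po Qo Qo dm cat_id[OF cB Qo] f] .
    moreover have "cmp D (idm D Q) (cmp D f (Fm (d (n - 1)))) = zr D (Fo (P (n - 1))) Q"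
      using fz cat_idl[OF cB FPo Qo zr_closed[OF pB FPo Qo]] by simp
    moreover have "cmp C (Gm (idm D Q)) (cmp C (\<phi> (P n) Q f) (d (n - 1))) = cmp C (\<phi> (P n) Q f) (d (n - 1))"
      using fun_id[OF fG Qo] cat_idl[OF cA Po GQo cat_comp[OF cA Po Po GQo dm pf]] by simp
    moreover have "\<phi> (P (n - 1)) Q (zr D (Fo (P (n - 1))) Q) = zr C (P (n - 1)) (Go Q)"
      using phi_zr[OF A B adj F bij nat Po Qo] .
    ultimately have "cmp C (\<phi> (P n) Q f) (d (n - 1)) = zr C (P (n - 1)) (Go Q)" by simp
    then obtain g' where g': "g' \<in> hom C (P (n + 1)) (Go Q)" "\<phi> (P n) Q f = cmp C g' (d n)"
      using hq[OF GQ pf] by blast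
    define g where "g = inv_into (hom D (Fo (P (n + 1))) Q) (\<phi> (P (n + 1)) Q) g'"
    have g: "g \<in> hom D (Fo (P (n + 1))) Q" unfolding g_def using bij_betw_apply[OF bij_betw_inv_into[OF bij[OF Po Qo]] g'(1)] .
    have pg: "\<phi> (P (n + 1)) Q g = g'" unfolding g_def using bij_betw_inv_into_right[OF bij[OF Po Qo] g'(1)] .
    have "\<phi> (P n) Q (cmp D (idm D Q) (cmp D g (Fm (d n)))) = cmp C (Gm (idm D Q)) (cmp C (\<phi> (P (n + 1)) Q g) (d n))"
      using nat[OF Po Po Qo Qo dh cat_id[OF cB Qo] g] .
    moreover have gF: "cmp D g (Fm (d n)) \<in> hom D (Fo (P n)) Q"
      using cat_comp[OF cB FPo FPo Qo fun_hom[OF fF Po Po dh] g] .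
    ultimately have "\<phi> (P n) Q (cmp D g (Fm (d n))) = \<phi> (P n) Q f"
      using cat_idl[OF cB FPo Qo gF] fun_id[OF fG Qo] pg g'(2) cat_idl[OF cA Po GQo cat_comp[OF cA Po Po GQo dh g'(1)]] by simp
    then have "cmp D g (Fm (d n)) = f" using bij_betw_imp_inj_on[OF bij[OF Po Qo]] f gF unfolding inj_on_def by blast
    then show "\<exists>g\<in>hom D (Fo (P (n + 1))) Q. f = cmp D g (Fm (d n))" using g by blast
  qed
qed


lemma gp_obj: assumes "gorenstein_projective C X" shows "X \<in> obj C"
  using assms unfolding gorenstein_projective_def by (elim exE conjE) (drule ker_parts, elim conjE, assumption)

lemma F_gpd:
  assumes A: "is_abelian C" and B: "is_abelian D" and adj: "left_adjoint C D Fo Fm Go Gm"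
    and F: "exact_functor C D Fo Fm" and G: "exact_functor D C Go Gm"
    and GP: "\<forall>P. is_projective D P \<longrightarrow> is_projective C (Go P)"
    and X: "X \<in> obj C" and g: "gpd_le C X n"
  shows "gpd_le D (Fo X) n"
proof -
  obtain S c where S0: "S 0 = X" and gp: "\<forall>i \<le> n. gorenstein_projective C (S (Suc i))"
    and ch: "\<forall>j \<le> n. c j \<in> hom C (S (Suc j)) (S j)"
    and ep: "is_epi C (S 1) (S 0) (c 0)" and mo: "is_mono C (S (Suc n)) (S n) (c n)"
    and ex: "\<forall>j < n. exact_at C (S (j + 2)) (S (j + 1)) (S j) (c (j + 1)) (c j)"
    using g unfolding gpd_le_def apply (elim conjE exE) apply (rule that) apply assumption+ done
  have fF: "is_functor C D Fo Fm" using adj_F[OF adj] .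
  have So: "S i \<in> obj C" if "i \<le> Suc n" for i
  proof (cases i)
    case 0 then show ?thesis using S0 X by simp
  next
    case (Suc j)
    then have "j \<le> n" using that by simp
    then have "gorenstein_projective C (S (Suc j))" using gp by blast
    then show ?thesis using gp_obj Suc by simp
  qed
  show ?thesis unfolding gpd_le_def
  proof (intro exI[of _ "\<lambda>i. Fo (S i)"] exI[of _ "\<lambda>j. Fm (c j)"] conjI allI impI)
    show "Fo (S 0) = Fo X" using S0 by simp
    fix i assume "i \<le> n" then show "gorenstein_projective D (Fo (S (Suc i)))"
      using F_gp[OF A B adj F G GP] gp by blast
  next
    fix j assume j: "j \<le> n"
    show "Fm (c j) \<in> hom D (Fo (S (Suc j))) (Fo (S j))" using fun_hom[OF fF So So] ch j by simp
  next
    show "is_epi D (Fo (S 1)) (Fo (S 0)) (Fm (c 0))" using F_epi[OF A B F ep] .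
  next
    show "is_mono D (Fo (S (Suc n))) (Fo (S n)) (Fm (c n))" using F_mono[OF A B F mo] .
  next
    fix j assume "j < n"
    then show "exact_at D (Fo (S (j + 2))) (Fo (S (j + 1))) (Fo (S j)) (Fm (c (j + 1))) (Fm (c j))"
      using ex_pres[OF F] ex by blast
  qed
qed

theorem lemma3p6:
  fixes A :: "('o1, 'm1) cat" and B :: "('o2, 'm2) cat"
    and Fo :: "'o1 \<Rightarrow> 'o2" and Fm :: "'m1 \<Rightarrow> 'm2"
    and Go :: "'o2 \<Rightarrow> 'o1" and Gm :: "'m2 \<Rightarrow> 'm1"
  assumes "is_abelian A" and "is_abelian B"
    and "enough_projectives A" and "enough_projectives B"
    and "left_adjoint A B Fo Fm Go Gm"
    and "exact_functor A B Fo Fm" and "exact_functor B A Go Gm"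
    and "\<forall>P. is_projective B P \<longrightarrow> is_projective A (Go P)"
  shows "(\<forall>X \<in> obj A. Gpd B (Fo X) \<le> Gpd A X)
       \<and> (\<forall>X \<in> obj A. gorenstein_projective A X \<longrightarrow> gorenstein_projective B (Fo X))"
proof (intro conjI ballI impI)
  fix X assume X: "X \<in> obj A"
  have "{enat n | n. gpd_le A X n} \<subseteq> {enat n | n. gpd_le B (Fo X) n}"
    using F_gpd[OF assms(1,2,5,6,7,8) X] by blast
  then show "Gpd B (Fo X) \<le> Gpd A X" unfolding Gpd_def by (rule Inf_superset_mono)
next
  fix X assume "X \<in> obj A" "gorenstein_projective A X"
  then show "gorenstein_projective B (Fo X)" using F_gp[OF assms(1,2,5,6,7,8)] by blast
qed

end
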